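(* Let $n\ge1$ and let $f(z)=\sum_{m=0}^\infty f_m z^m$ be analytic in a neighborhood of $0$. Then \[ r_n(f;z)=(-1)^n\frac{(n!)^2}{((2n)!)^2}\, f_{2n+1}z^{2n+1}+O(z^{2n+2}) \qquad (z\to 0). \] In particular, $r_n(p;z)\equiv 0$ for every polynomial $p$ of degree at most $2n$.
   Context: For $n\ge1$ let $y_n(z)=\sum_{k=0}^{n}\frac{(n+k)!}{(n-k)!\,k!}\left(\frac{z}{2}\right)^k$ be the $n$-th Bessel polynomial and let $\alpha_{n1},\dots,\alpha_{nn}$ be its zeros (they are simple). Put $a_{nk}=1-\alpha_{nk}/2$ and $b_{nk}=1+\alpha_{nk}/2$ for $k=1,\dots,n$. For $f$ analytic near $0$ define the remainder $r_n(f;z)=zf'(z)-\sum_{k=1}^n\big(f(a_{nk}z)-f(b_{nk}z)\big)$ (defined for $z$ near $0$). *)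

theory Defs
  imports "HOL-Complex_Analysis.Complex_Analysis" "HOL-Library.Landau_Symbols"
    "HOL-Computational_Algebra.Polynomial"
begin

definition bessel_poly :: "nat \<Rightarrow> complex \<Rightarrow> complex" where
  "bessel_poly n z = (\<Sum>k=0..n. of_real (fact (n+k) / (fact (n-k) * fact k)) * (z/2)^k)"

text \<open>The zeros alpha_{n1},...,alpha_{nn} of y_n (they are simple, so the set has n elements).\<close>
definition bessel_zeros :: "nat \<Rightarrow> complex set" where
  "bessel_zeros n = {z. bessel_poly n z = 0}"

definition bessel_remainder :: "nat \<Rightarrow> (complex \<Rightarrow> complex) \<Rightarrow> complex \<Rightarrow> complex" where
  "bessel_remainder n f z = z * deriv f z
     - (\<Sum>\<alpha>\<in>bessel_zeros n. f ((1 - \<alpha>/2) * z) - f ((1 + \<alpha>/2) * z))"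

definition taylor_coeff :: "(complex \<Rightarrow> complex) \<Rightarrow> nat \<Rightarrow> complex" where
  "taylor_coeff f m = (deriv ^^ m) f 0 / fact m"

end

theory Submission
  imports Defs "HOL-Complex_Analysis.Laurent_Convergence"
    "HOL-Computational_Algebra.Fundamental_Theorem_Algebra" "HOL-Computational_Algebra.Polynomial_FPS"
begin


definition yr :: "nat \<Rightarrow> nat \<Rightarrow> real" where
  "yr n k = (if k \<le> n then fact (n+k) / (fact (n-k) * fact k) / 2^k else 0)"

definition yc :: "nat \<Rightarrow> nat \<Rightarrow> complex" where
  "yc n k = of_real (yr n k)"

lemma yr_rec:
  assumes "k < n"
  shows "2 * real (k+1) * yr n (k+1) = real (n-k) * real (n+k+1) * yr n k"
proof -
  have f1: "(fact (n+(k+1)) :: real) = of_nat (n+k+1) * fact (n+k)"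
    by (metis add_Suc_right fact_Suc semiring_norm(174))
  have f2: "(fact (n-k) :: real) = of_nat (n-k) * fact (n-(k+1))"
    using assms by (metis Suc_diff_Suc Suc_eq_plus1 fact_Suc)
  have f3: "(fact (k+1) :: real) = of_nat (k+1) * fact k" by simp
  have nz: "real (n-k) \<noteq> 0" using assms by simp
  have "yr n (k+1) = of_nat (n+k+1) * fact (n+k) / (fact (n-(k+1)) * (of_nat (k+1) * fact k)) / 2^(k+1)"
    unfolding yr_def using assms f1 f3 by simp
  moreover have "yr n k = fact (n+k) / (of_nat (n-k) * fact (n-(k+1)) * fact k) / 2^k"
    unfolding yr_def using assms f2 by simp
  moreover have aux: "\<And>A B C d e p t :: real. B>0 \<Longrightarrow> C>0 \<Longrightarrow> d\<noteq>0 \<Longrightarrow> p>0 \<Longrightarrow> t>0 \<Longrightarrow>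
     2*p*(e*A/(B*(p*C))/(2*t)) = d*e*(A/(d*B*C)/t)"
    by (simp add: field_simps)
  ultimately show ?thesis using nz by (simp only: power_Suc Suc_eq_plus1[symmetric] aux fact_gt_zero zero_less_power
         of_nat_0_less_iff zero_less_Suc zero_less_numeral)
qed

lemma yc_rec:
  assumes "k < n"
  shows "2 * of_nat (k+1) * yc n (k+1) = of_nat (n-k) * of_nat (n+k+1) * yc n k"
proof -
  have "complex_of_real (2 * real (k+1) * yr n (k+1)) = of_real (real (n-k) * real (n+k+1) * yr n k)"
    using yr_rec[OF assms] by simp
  thus ?thesis unfolding yc_def by simp
qed

lemma yr_pos: "k \<le> n \<Longrightarrow> yr n k > 0" by (simp add: yr_def)
lemma yc_nz: "k \<le> n \<Longrightarrow> yc n k \<noteq> 0" using yr_pos by (simp add: yc_def) (metis less_irrefl)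
lemma yc_0: "yc n 0 = 1" by (simp add: yc_def yr_def)
lemma yc_big: "k > n \<Longrightarrow> yc n k = 0" by (simp add: yc_def yr_def)

lemma bessel_poly_yc: "bessel_poly n z = (\<Sum>k\<le>n. yc n k * z^k)"
  unfolding bessel_poly_def yc_def yr_def
  by (intro sum.cong) (auto simp: power_divide atMost_atLeast0)

definition Yp :: "nat \<Rightarrow> complex poly" where
  "Yp n = (\<Sum>k\<le>n. monom (yc n k) k)"

lemma coeff_Yp: "coeff (Yp n) k = yc n k"
  unfolding Yp_def by (simp add: coeff_sum coeff_monom yc_big)

lemma poly_Yp: "poly (Yp n) z = bessel_poly n z"
  unfolding Yp_def bessel_poly_yc by (simp add: poly_sum poly_monom)

lemma degree_Yp: "degree (Yp n) = n"
  by (intro antisym degree_le le_degree) (auto simp: coeff_Yp yc_nz yc_big)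



lemma coeff_X2_mult: "coeff (monom 1 2 * (p::complex poly)) m = (if m \<ge> 2 then coeff p (m-2) else 0)"
  by (auto simp add: coeff_monom_mult)

lemma Yp_ode_coeff:
  "coeff (monom 1 2 * pderiv (pderiv (Yp n)) + (monom 2 1 + [:2:]) * pderiv (Yp n)) m
   = coeff (smult (of_nat (n*(n+1))) (Yp n)) m"
proof -
  have c1: "coeff ((monom 2 1 + [:2:]) * p) m = 2 * coeff p m + (if m \<ge> 1 then 2 * coeff p (m-1) else 0)" for p :: "complex poly" and m
    by (simp add: distrib_right coeff_monom_mult)
  have main: "of_nat m * (of_nat m - 1) * yc n m + 2 * of_nat (m+1) * yc n (m+1) + 2 * of_nat m * yc n m
      = of_nat (n*(n+1)) * yc n m"
  proof (cases "m < n")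
    case True
    have "2 * of_nat (m+1) * yc n (m+1) = of_nat (n-m) * of_nat (n+m+1) * yc n m"
      using yc_rec[OF True] .
    moreover have "(of_nat (n-m) :: complex) = of_nat n - of_nat m" using True by (simp add: of_nat_diff)
    ultimately show ?thesis by (simp add: algebra_simps)
  next
    case False
    then show ?thesis
      by (cases "m = n") (auto simp: yc_big algebra_simps)
  qed
  have lhs: "coeff (monom 1 2 * pderiv (pderiv (Yp n)) + (monom 2 1 + [:2:]) * pderiv (Yp n)) m
     = of_nat m * (of_nat m - 1) * yc n m + 2 * of_nat (m+1) * yc n (m+1) + 2 * of_nat m * yc n m"
  proof (cases m)
    case 0 thus ?thesis unfolding coeff_add coeff_X2_mult c1 by (simp add: coeff_pderiv coeff_Yp)
  next
    case (Suc j)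
    show ?thesis
    proof (cases j)
      case 0 thus ?thesis using Suc unfolding coeff_add coeff_X2_mult c1 by (simp add: coeff_pderiv coeff_Yp)
    next
      case (Suc i)
      thus ?thesis using \<open>m = Suc j\<close> unfolding coeff_add coeff_X2_mult c1 by (simp add: coeff_pderiv coeff_Yp algebra_simps)
    qed
  qed
  show ?thesis unfolding lhs main by (simp add: coeff_Yp)
qed



definition Phi :: "nat \<Rightarrow> nat \<Rightarrow> complex poly \<Rightarrow> complex poly" where
  "Phi n k A = monom 1 2 * pderiv (pderiv A) + [:2, 2 * of_nat (k+1):] * pderiv A
      + smult (of_nat (k*(k+1)) - of_nat (n*(n+1))) A"

lemma pderiv_Phi: "pderiv (Phi n k A) = Phi n (Suc k) (pderiv A)"
proof -
  have e1: "monom 2 1 + [:2, 2 * of_nat (k+1):] = ([:2, 2 * of_nat (Suc k+1):] :: complex poly)"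
    by (rule poly_eqI) (auto simp: coeff_monom coeff_pCons split: nat.splits)
  have e2: "[:2 * of_nat (k+1):] * B + smult (of_nat (k*(k+1)) - of_nat (n*(n+1))) B
       = smult (of_nat (Suc k*(Suc k+1)) - of_nat (n*(n+1))) (B :: complex poly)" for B
    by (simp add: smult_add_left[symmetric] algebra_simps)
  have "pderiv (Phi n k A) = monom 1 2 * pderiv (pderiv (pderiv A)) + (monom 2 1 + [:2, 2 * of_nat (k+1):]) * pderiv (pderiv A)
      + ([:2 * of_nat (k+1):] * pderiv A + smult (of_nat (k*(k+1)) - of_nat (n*(n+1))) (pderiv A))"
    unfolding Phi_def by (simp add: pderiv_mult pderiv_add pderiv_smult pderiv_monom pderiv_pCons algebra_simps)
  also have "\<dots> = Phi n (Suc k) (pderiv A)"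
    unfolding e1 e2 Phi_def by simp
  finally show ?thesis .
qed

lemma Phi0: "Phi n 0 (Yp n) = 0"
proof -
  have o: "monom 1 2 * pderiv (pderiv (Yp n)) + (monom 2 1 + [:2:]) * pderiv (Yp n) = smult (of_nat (n*(n+1))) (Yp n)"
    by (rule poly_eqI) (rule Yp_ode_coeff)
  have e: "monom 2 1 + [:2:] = ([:2, 2 * of_nat (0+1):] :: complex poly)"
    by (rule poly_eqI) (auto simp: coeff_monom coeff_pCons split: nat.splits)
  have h: "monom 1 2 * pderiv (pderiv (Yp n)) + [:2, 2 * of_nat (0+1):] * pderiv (Yp n) = smult (of_nat (n*(n+1))) (Yp n)"
    using o unfolding e .
  show ?thesis unfolding Phi_def h smult_add_left[symmetric] by simp
qed

lemma Phik: "Phi n k ((pderiv ^^ k) (Yp n)) = 0"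
proof (induction k)
  case 0 thus ?case using Phi0 by simp
next
  case (Suc k)
  have "Phi n (Suc k) ((pderiv ^^ Suc k) (Yp n)) = pderiv (Phi n k ((pderiv ^^ k) (Yp n)))"
    by (simp add: pderiv_Phi)
  thus ?case using Suc by simp
qed

lemma poly_Yp_0: "poly (Yp n) 0 = 1"
  by (simp add: poly_0_coeff_0 coeff_Yp yc_0)

lemma rsquarefree_Yp: "rsquarefree (Yp n)"
  unfolding rsquarefree_roots
proof (intro allI notI)
  fix a assume a: "poly (Yp n) a = 0 \<and> poly (pderiv (Yp n)) a = 0"
  have a0: "a \<noteq> 0" using a poly_Yp_0 by auto
  have all: "poly ((pderiv ^^ k) (Yp n)) a = 0 \<and> poly ((pderiv ^^ Suc k) (Yp n)) a = 0" for k
  proof (induction k)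
    case 0 thus ?case using a by simp
  next
    case (Suc k)
    have "poly (Phi n k ((pderiv ^^ k) (Yp n))) a = 0" using Phik by simp
    hence "a^2 * poly ((pderiv ^^ Suc (Suc k)) (Yp n)) a = 0"
      using Suc by (simp add: Phi_def poly_monom)
    thus ?case using Suc a0 by simp
  qed
  have dg: "degree ((pderiv ^^ n) (Yp n)) = 0" by (simp add: degree_higher_pderiv degree_Yp)
  have "poly ((pderiv ^^ n) (Yp n)) a = coeff ((pderiv ^^ n) (Yp n)) 0"
    by (simp add: poly_altdef dg)
  moreover have "coeff ((pderiv ^^ n) (Yp n)) 0 \<noteq> 0"
    using yc_nz[of n n] by (simp add: coeff_higher_pderiv coeff_Yp pochhammer_fact[symmetric])
  ultimately have "poly ((pderiv ^^ n) (Yp n)) a \<noteq> 0" by simp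
  thus False using all by blast
qed



definition q :: "nat \<Rightarrow> nat \<Rightarrow> complex" where
  "q n i = (if i \<le> n then yc n (n-i) / yc n n else 0)"

definition Qpoly :: "nat \<Rightarrow> complex poly" where
  "Qpoly n = (\<Prod>z\<in>bessel_zeros n. [:1, -z:])"

lemma bessel_zeros_Yp: "bessel_zeros n = {z. poly (Yp n) z = 0}"
  by (simp add: bessel_zeros_def poly_Yp)

lemma finite_bessel_zeros: "finite (bessel_zeros n)"
proof -
  have "Yp n \<noteq> 0" using poly_Yp_0[of n] by auto
  thus ?thesis unfolding bessel_zeros_Yp by (rule poly_roots_finite)
qed

lemma lead_Yp: "lead_coeff (Yp n) = yc n n"
  by (simp add: degree_Yp coeff_Yp)

lemma reflect_lin: "reflect_poly [:-z, 1:] = [:1, -(z::complex):]"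
  by (rule poly_eqI) (auto simp: coeff_reflect_poly coeff_pCons split: nat.splits)

lemma reflect_Yp: "reflect_poly (Yp n) = smult (yc n n) (Qpoly n)"
proof -
  have "Yp n = smult (yc n n) (\<Prod>z\<in>bessel_zeros n. [:-z, 1:])"
    using complex_poly_decompose_rsquarefree[OF rsquarefree_Yp[of n]]
    unfolding bessel_zeros_Yp lead_Yp by simp
  hence "reflect_poly (Yp n) = smult (yc n n) (\<Prod>z\<in>bessel_zeros n. reflect_poly [:-z, 1:])"
    by (metis reflect_poly_smult reflect_poly_prod)
  thus ?thesis unfolding reflect_lin Qpoly_def .
qed

lemma coeff_Qpoly: "coeff (Qpoly n) i = q n i"
proof -
  have "coeff (reflect_poly (Yp n)) i = yc n n * coeff (Qpoly n) i"
    using reflect_Yp by simp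
  moreover have "coeff (reflect_poly (Yp n)) i = (if i \<le> n then yc n (n-i) else 0)"
    by (simp add: coeff_reflect_poly degree_Yp coeff_Yp)
  ultimately show ?thesis using yc_nz[of n n] unfolding q_def
    by (auto simp: field_simps)
qed

lemma q0: "q n 0 = 1" using yc_nz[of n n] by (simp add: q_def)

lemma q_rec:
  "of_nat (m+1) * (of_nat m - 2 * of_nat n) * q n (m+1) + 2 * (of_nat n - of_nat m) * q n m = 0"
proof (cases "m+1 \<le> n")
  case True
  define k where "k = n - m - 1"
  have kn: "k < n" using True k_def by simp
  have mk: "m = n - k - 1" "n - (m+1) = k" "n - m = k + 1" using True k_def by auto
  have r: "2 * of_nat (k+1) * yc n (k+1) = of_nat (n-k) * of_nat (n+k+1) * yc n k"
    by (rule yc_rec[OF kn])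
  have c1: "(of_nat (m+1) :: complex) = of_nat n - of_nat k" using True k_def by (simp add: of_nat_diff)
  have c2: "(of_nat m :: complex) = of_nat n - of_nat k - 1" using True k_def by (simp add: of_nat_diff)
  have c3: "(of_nat (n-k) :: complex) = of_nat n - of_nat k" using kn by (simp add: of_nat_diff)
  have prev: "of_nat (m+1) * (of_nat m - 2 * of_nat n) * yc n k + 2 * (of_nat n - of_nat m) * yc n (k+1) = 0"
    using r unfolding c1 c2 c3 by (simp add: algebra_simps)
  have e1: "yc n k = yc n n * q n (m+1)" and e2: "yc n (k+1) = yc n n * q n m"
    using True mk yc_nz[of n n] by (auto simp: q_def)
  have "yc n n * (of_nat (m+1) * (of_nat m - 2 * of_nat n) * q n (m+1) + 2 * (of_nat n - of_nat m) * q n m) = 0"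
    using prev unfolding e1 e2 by (simp add: algebra_simps)
  thus ?thesis using yc_nz[of n n] by simp
next
  case False
  thus ?thesis by (cases "m = n") (auto simp: q_def)
qed



definition Qf :: "nat \<Rightarrow> complex fps" where "Qf n = fps_of_poly (Qpoly n)"
definition Lf :: "nat \<Rightarrow> complex fps" where
  "Lf n = Abs_fps (\<lambda>j. -(\<Sum>z\<in>bessel_zeros n. z^(j+1)))"
definition negf :: "complex fps \<Rightarrow> complex fps" where
  "negf A = Abs_fps (\<lambda>i. (-1)^i * A$i)"
definition Bf :: "nat \<Rightarrow> complex fps" where "Bf n = negf (Qf n)"

lemma Qf_nth: "Qf n $ i = q n i" by (simp add: Qf_def coeff_Qpoly)

lemma geom_aux: "(1 + fps_const (-a) * fps_X) * Abs_fps (\<lambda>j. -(a^(j+1))) = fps_const (-(a::complex))"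
proof (rule fps_ext)
  fix j show "((1 + fps_const (-a) * fps_X) * Abs_fps (\<lambda>j. -(a^(j+1)))) $ j = fps_const (-a) $ j"
    by (cases j) (simp_all add: distrib_right mult.assoc)
qed

lemma logderiv_prod:
  fixes S :: "complex set"
  assumes "finite S"
  shows "fps_deriv (\<Prod>z\<in>S. 1 + fps_const (-z) * fps_X) =
         (\<Prod>z\<in>S. 1 + fps_const (-z) * fps_X) * Abs_fps (\<lambda>j. -(\<Sum>z\<in>S. z^(j+1::nat)))"
  using assms
proof (induction S rule: finite_induct)
  case empty
  show ?case by (simp add: fps_eq_iff)
next
  case (insert a S)
  let ?P = "\<Prod>z\<in>S. 1 + fps_const (-z) * fps_X"
  let ?L = "Abs_fps (\<lambda>j. -(\<Sum>z\<in>S. z^(j+1::nat)))"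
  let ?G = "Abs_fps (\<lambda>j. -(a^(j+1)))"
  have split: "Abs_fps (\<lambda>j. -(\<Sum>z\<in>insert a S. z^(j+1::nat))) = ?L + ?G"
    using insert by (simp add: fps_ext)
  have "fps_deriv (\<Prod>z\<in>insert a S. 1 + fps_const (-z) * fps_X)
        = fps_deriv ((1 + fps_const (-a) * fps_X) * ?P)" using insert by simp
  also have "\<dots> = fps_const (-a) * ?P + (1 + fps_const (-a) * fps_X) * (?P * ?L)"
    using insert by (simp add: algebra_simps)
  also have "fps_const (-a) * ?P = ((1 + fps_const (-a) * fps_X) * ?G) * ?P"
    by (simp only: geom_aux)
  also have "((1 + fps_const (-a) * fps_X) * ?G) * ?P + (1 + fps_const (-a) * fps_X) * (?P * ?L)
      = ((1 + fps_const (-a) * fps_X) * ?P) * (?L + ?G)"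
    by (simp add: algebra_simps)
  finally show ?case using insert split by simp
qed

lemma Qf_prod: "Qf n = (\<Prod>z\<in>bessel_zeros n. 1 + fps_const (-z) * fps_X)"
  unfolding Qf_def Qpoly_def fps_of_poly_prod by (simp add: fps_of_poly_linear')

lemma Qf_deriv: "fps_deriv (Qf n) = Qf n * Lf n"
  unfolding Qf_prod Lf_def by (rule logderiv_prod[OF finite_bessel_zeros])

lemma negf_mult: "negf (A * B) = negf A * negf B"
proof (rule fps_ext)
  fix m
  have "negf (A * B) $ m = (\<Sum>i=0..m. (-1)^m * (A$i * B$(m-i)))"
    by (simp add: negf_def fps_mult_nth sum_distrib_left)
  also have "\<dots> = (\<Sum>i=0..m. ((-1)^i * A$i) * ((-1)^(m-i) * B$(m-i)))"
  proof (intro sum.cong refl)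
    fix i assume "i \<in> {0..m}"
    hence "(-1::complex)^m = (-1)^i * (-1)^(m-i)" by (simp add: power_add[symmetric])
    thus "(-1)^m * (A$i * B$(m-i)) = ((-1)^i * A$i) * ((-1)^(m-i) * B$(m-i))" by simp
  qed
  also have "\<dots> = (negf A * negf B) $ m" by (simp add: negf_def fps_mult_nth)
  finally show "negf (A * B) $ m = (negf A * negf B) $ m" .
qed

lemma negf_deriv: "fps_deriv (negf A) = - negf (fps_deriv A)"
  by (rule fps_ext) (simp add: negf_def)

lemma Bf_deriv: "fps_deriv (Bf n) = - (Bf n * negf (Lf n))"
  unfolding Bf_def negf_deriv Qf_deriv negf_mult ..

lemma Bf_nth: "Bf n $ i = (-1)^i * q n i" by (simp add: Bf_def negf_def Qf_nth)

definition ODE :: "nat \<Rightarrow> complex fps \<Rightarrow> complex fps" where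
  "ODE n A = fps_X * fps_deriv (fps_deriv A) - fps_const 2 * (fps_X + fps_const (of_nat n)) * fps_deriv A
      + fps_const (2 * of_nat n) * A"

definition ODEB :: "nat \<Rightarrow> complex fps \<Rightarrow> complex fps" where
  "ODEB n A = fps_const 2 * (fps_const (of_nat n) - fps_X) * fps_deriv A - fps_X * fps_deriv (fps_deriv A)
      + fps_const (2 * of_nat n) * A"

lemma ODE_nth: "ODE n A $ m = of_nat (m+1) * (of_nat m - 2 * of_nat n) * A $ (m+1) + 2 * (of_nat n - of_nat m) * A $ m"
  by (cases m) (simp_all add: ODE_def algebra_simps)

lemma ODEB_nth: "ODEB n A $ m = - of_nat (m+1) * (of_nat m - 2 * of_nat n) * A $ (m+1) + 2 * (of_nat n - of_nat m) * A $ m"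
  by (cases m) (simp_all add: ODEB_def algebra_simps)

lemma Qf_ode: "ODE n (Qf n) = 0"
  by (rule fps_ext) (simp add: ODE_nth Qf_nth q_rec[simplified])

lemma Bf_ode: "ODEB n (Bf n) = 0"
proof (rule fps_ext)
  fix m
  have "ODEB n (Bf n) $ m = (-1)^m * (of_nat (m+1) * (of_nat m - 2 * of_nat n) * q n (m+1) + 2 * (of_nat n - of_nat m) * q n m)"
    by (simp add: ODEB_nth Bf_nth algebra_simps)
  thus "ODEB n (Bf n) $ m = 0 $ m" using q_rec[of m n] by simp
qed



definition phi :: "nat \<Rightarrow> complex fps" where "phi n = Qf n - fps_exp 2 * Bf n"

lemma ODE_EB: "ODE n (fps_exp 2 * B) = - (fps_exp 2 * ODEB n B)"
  by (simp add: ODE_def ODEB_def algebra_simps)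

lemma ODE_diff: "ODE n (A - B) = ODE n A - ODE n B"
  by (simp add: ODE_def algebra_simps)

lemma phi_ode: "ODE n (phi n) = 0"
  unfolding phi_def ODE_diff ODE_EB Qf_ode Bf_ode by simp

lemma phi0: "phi n $ 0 = 0"
  by (simp add: phi_def Qf_nth Bf_nth q0)

lemma phi_vanish: "m \<le> 2*n \<Longrightarrow> phi n $ m = 0"
proof (induction m)
  case 0 show ?case by (rule phi0)
next
  case (Suc m)
  have "ODE n (phi n) $ m = 0" using phi_ode by simp
  hence e: "of_nat (m+1) * (of_nat m - 2 * of_nat n) * phi n $ (m+1) + 2 * (of_nat n - of_nat m) * phi n $ m = 0"
    by (simp add: ODE_nth)
  have "phi n $ m = 0" using Suc by simp
  with e have "of_nat (m+1) * (of_nat m - 2 * of_nat n) * phi n $ (m+1) = 0" by simp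
  moreover have "(of_nat m - 2 * of_nat n :: complex) \<noteq> 0"
  proof
    assume "(of_nat m - 2 * of_nat n :: complex) = 0"
    hence "(of_nat m :: complex) = of_nat (2*n)" by simp
    hence "m = 2*n" using of_nat_eq_iff by blast
    thus False using Suc by simp
  qed
  moreover have "(1 + of_nat m :: complex) \<noteq> 0"
    by (metis of_nat_Suc of_nat_eq_0_iff nat.distinct(1))
  ultimately show ?case by simp
qed

definition Wf :: "nat \<Rightarrow> complex fps" where "Wf n = fps_const 2 - Lf n - negf (Lf n)"

lemma EB_W: "fps_exp 2 * Bf n * Wf n = phi n * Lf n - fps_deriv (phi n)"
proof -
  have q: "Qf n = fps_exp 2 * Bf n + phi n" by (simp add: phi_def)
  have h1: "fps_deriv (fps_exp 2 * Bf n + phi n) = (fps_exp 2 * Bf n + phi n) * Lf n"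
    using Qf_deriv[of n] unfolding q .
  have "fps_exp 2 * Bf n * Wf n - (phi n * Lf n - fps_deriv (phi n))
        = fps_deriv (fps_exp 2 * Bf n + phi n) - (fps_exp 2 * Bf n + phi n) * Lf n"
    by (simp add: Wf_def Bf_deriv algebra_simps)
  hence "fps_exp 2 * Bf n * Wf n - (phi n * Lf n - fps_deriv (phi n)) = 0"
    by (simp only: h1 diff_self)
  thus ?thesis by (simp only: right_minus_eq)
qed

lemma unit_mult_coeffs:
  fixes A W :: "complex fps"
  assumes "A $ 0 = 1" "\<And>j. j < N \<Longrightarrow> (A * W) $ j = 0"
  shows "\<forall>j<N. W $ j = 0" "(A * W) $ N = W $ N"
proof -
  have eq: "(A * W) $ j = W $ j" if "\<forall>i<j. W $ i = 0" for j
  proof -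
    have "(A * W) $ j = (\<Sum>i=0..j. A$i * W$(j-i))" by (simp add: fps_mult_nth)
    also have "\<dots> = A$0 * W$(j-0) + (\<Sum>i=Suc 0..j. A$i * W$(j-i))"
      by (rule sum.atLeast_Suc_atMost) simp
    also have "(\<Sum>i=Suc 0..j. A$i * W$(j-i)) = 0"
      by (rule sum.neutral) (use that in auto)
    finally show ?thesis using assms(1) by simp
  qed
  show all: "\<forall>j<N. W $ j = 0"
  proof (intro allI impI)
    fix j assume "j < N" thus "W $ j = 0"
    proof (induction j rule: less_induct)
      case (less j)
      hence "\<forall>i<j. W $ i = 0" by simp
      from eq[OF this] assms(2)[OF less.prems] show ?case by simp
    qed
  qed
  show "(A * W) $ N = W $ N" by (rule eq) (use all in simp)
qed



definition psum :: "nat \<Rightarrow> nat \<Rightarrow> complex" where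
  "psum n p = (\<Sum>z\<in>bessel_zeros n. z^p)"

definition kappa :: "nat \<Rightarrow> complex" where "kappa n = phi n $ (2*n+1)"

lemma Lf_nth: "Lf n $ j = - psum n (j+1)" by (simp add: Lf_def psum_def)

lemma Wf_nth: "Wf n $ j = (if j = 0 then 2 else 0) + psum n (j+1) + (-1)^j * psum n (j+1)"
  by (simp add: Wf_def negf_def Lf_nth)

lemma W_coeffs:
  assumes "n \<ge> 1"
  shows "\<forall>j<2*n. Wf n $ j = 0" "Wf n $ (2*n) = - (of_nat (2*n+1) * kappa n)"
proof -
  let ?A = "fps_exp 2 * Bf n"
  have A0: "?A $ 0 = 1" by (simp add: Bf_nth q0)
  have pL: "(phi n * Lf n) $ j = 0" if "j \<le> 2*n" for j
    unfolding fps_mult_nth by (rule sum.neutral) (use that in \<open>auto simp: phi_vanish\<close>)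
  have r: "(?A * Wf n) $ j = (phi n * Lf n) $ j - of_nat (j+1) * phi n $ (j+1)" for j
  proof -
    have "(?A * Wf n) $ j = (phi n * Lf n - fps_deriv (phi n)) $ j" by (simp only: EB_W)
    thus ?thesis by (simp add: fps_deriv_nth)
  qed
  have lo: "(?A * Wf n) $ j = 0" if "j < 2*n" for j
    using that r[of j] pL[of j] phi_vanish[of "j+1" n] by simp
  show "\<forall>j<2*n. Wf n $ j = 0" using unit_mult_coeffs(1)[OF A0 lo] .
  have "Wf n $ (2*n) = (?A * Wf n) $ (2*n)" using unit_mult_coeffs(2)[OF A0 lo] by simp
  also have "\<dots> = - (of_nat (2*n+1) * kappa n)" using r[of "2*n"] pL[of "2*n"] by (simp add: kappa_def)
  finally show "Wf n $ (2*n) = - (of_nat (2*n+1) * kappa n)" .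
qed

lemma psum_odd:
  assumes "n \<ge> 1"
  shows "psum n 1 = -1" "\<And>k. 0 < k \<Longrightarrow> k < n \<Longrightarrow> psum n (2*k+1) = 0"
        "2 * psum n (2*n+1) = - (of_nat (2*n+1) * kappa n)"
proof -
  have ev: "Wf n $ (2*k) = (if k = 0 then 2 else 0) + 2 * psum n (2*k+1)" for k
    by (simp add: Wf_nth)
  have "Wf n $ (2*0) = 0" using W_coeffs(1)[OF assms] assms by simp
  thus "psum n 1 = -1" using ev[of 0] by (simp add: add_eq_0_iff)
  show "psum n (2*k+1) = 0" if "0 < k" "k < n" for k
    using W_coeffs(1)[OF assms] ev[of k] that by simp
  show "2 * psum n (2*n+1) = - (of_nat (2*n+1) * kappa n)"
    using W_coeffs(2)[OF assms] ev[of n] assms by simp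
qed



definition pfs :: "nat \<Rightarrow> nat \<Rightarrow> real" where
  "pfs m a = (\<Sum>i=0..m. (-1)^i * real (m choose i) / real (a+i))"

lemma pf: "a \<ge> 1 \<Longrightarrow> pfs m a = fact m / pochhammer (real a) (Suc m)"
proof (induction m arbitrary: a)
  case 0 thus ?case by (simp add: pfs_def)
next
  case (Suc m)
  define g where "g i = (-1)^i / real (a+i)" for i
  have t: "(-1)^i * real (k choose i) / real (a+i) = g i * real (k choose i)" for i k
    by (simp add: g_def)
  have "pfs (Suc m) a = g 0 + (\<Sum>i=0..m. g (Suc i) * real (Suc m choose Suc i))"
    unfolding pfs_def t by (subst sum.atLeast0_atMost_Suc_shift) simp
  also have "\<dots> = g 0 + (\<Sum>i=0..m. g (Suc i) * real (m choose Suc i)) + (\<Sum>i=0..m. g (Suc i) * real (m choose i))"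
    by (simp add: distrib_left sum.distrib)
  also have "(\<Sum>i=0..m. g (Suc i) * real (m choose i)) = - pfs m (a+1)"
    unfolding pfs_def by (simp add: g_def sum_negf[symmetric] algebra_simps)
  also have "g 0 + (\<Sum>i=0..m. g (Suc i) * real (m choose Suc i)) = pfs m a"
  proof -
    have "(\<Sum>i=0..Suc m. g i * real (m choose i)) = g 0 + (\<Sum>i=0..m. g (Suc i) * real (m choose Suc i))"
      by (subst sum.atLeast0_atMost_Suc_shift) simp
    moreover have "(\<Sum>i=0..Suc m. g i * real (m choose i)) = pfs m a"
      unfolding pfs_def t by simp
    ultimately show ?thesis by simp
  qed
  finally have e: "pfs (Suc m) a = pfs m a - pfs m (a+1)" by simp
  have a1: "pfs m a = fact m / pochhammer (real a) (Suc m)" using Suc by simp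
  have a2: "pfs m (a+1) = fact m / pochhammer (real a + 1) (Suc m)" using Suc.IH[of "a+1"] Suc.prems by (simp add: add.commute)
  have p1: "pochhammer (real a) (Suc (Suc m)) = real a * pochhammer (real a + 1) (Suc m)"
    by (rule pochhammer_rec)
  have p2: "pochhammer (real a) (Suc (Suc m)) = (real a + real (Suc m)) * pochhammer (real a) (Suc m)"
    by (rule pochhammer_rec')
  have pos1: "pochhammer (real a) (Suc m) > 0" using Suc.prems by (intro pochhammer_pos) simp
  have pos2: "pochhammer (real a + 1) (Suc m) > 0" by (intro pochhammer_pos) simp
  have "real a > 0" using Suc.prems by simp
  have "pfs (Suc m) a * pochhammer (real a) (Suc (Suc m)) = fact (Suc m)"
  proof -
    have "pfs (Suc m) a * pochhammer (real a) (Suc (Suc m))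
        = pfs m a * pochhammer (real a) (Suc (Suc m)) - pfs m (a+1) * pochhammer (real a) (Suc (Suc m))"
      by (simp add: e algebra_simps)
    also have "pfs m a * pochhammer (real a) (Suc (Suc m)) = fact m * (real a + real (Suc m))"
      unfolding a1 p2 using pos1 by simp
    also have "pfs m (a+1) * pochhammer (real a) (Suc (Suc m)) = fact m * real a"
      unfolding a2 p1 using pos2 by simp
    finally show ?thesis by (simp add: algebra_simps)
  qed
  moreover have "pochhammer (real a) (Suc (Suc m)) > 0" using Suc.prems by (intro pochhammer_pos) simp
  ultimately show ?case by (simp add: field_simps)
qed



lemma Tj:
  assumes "j \<le> n"
  shows "2^(2*n+1-j) / fact (2*n+1-j) * (-1)^j * (yr n (n-j) / yr n n)
       = (-1)^j * 2^(2*n+1) / fact (2*n) * real (n choose j) / real (2*n+1-j)"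
proof -
  have e1: "n + (n-j) = 2*n-j" "n - (n-j) = j" using assms by auto
  have y1: "yr n (n-j) = fact (2*n-j) / (fact j * fact (n-j)) / 2^(n-j)"
    unfolding yr_def e1 by (simp add: mult.commute)
  have y2: "yr n n = fact (2*n) / fact n / 2^n" by (simp add: yr_def mult_2)
  have e2: "2*n+1-j = Suc (2*n-j)" using assms by simp
  have f: "(fact (2*n+1-j) :: real) = real (2*n+1-j) * fact (2*n-j)"
    unfolding e2 fact_Suc by simp
  have b: "real (n choose j) = fact n / (fact j * fact (n-j))" using assms by (rule binomial_fact)
  have p1: "(2::real)^(2*n+1-j) = 2^(2*n+1) / 2^j" using assms by (simp add: power_diff)
  have p2: "(2::real)^(n-j) = 2^n / 2^j" using assms by (simp add: power_diff)
  have pos: "real (2*n+1-j) > 0" using assms by simp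
  have aux: "\<And>(A::real) B C D E r s P Q U. A>0 \<Longrightarrow> B>0 \<Longrightarrow> C>0 \<Longrightarrow> D>0 \<Longrightarrow> E>0 \<Longrightarrow> r>0 \<Longrightarrow> P>0 \<Longrightarrow> Q>0 \<Longrightarrow> U>0 \<Longrightarrow>
     (P/U)/(r*A) * s * ((A/(B*C))/(Q/U)/((E/D)/Q)) = s*P/E * (D/(B*C))/r"
    by (simp add: field_simps)
  show ?thesis unfolding y1 y2 f b p1 p2 using pos
    by (intro aux) auto
qed


lemma poch_n1: "pochhammer (real (n+1)) (Suc n) = fact (2*n+1) / fact n"
proof -
  have h: "(fact (n + Suc n) :: real) = pochhammer 1 n * pochhammer (1 + of_nat n) (Suc n)"
    unfolding pochhammer_fact pochhammer_product' ..
  have e1: "n + Suc n = 2*n+1" by simp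
  have e2: "(1 + of_nat n :: real) = real (n+1)" by simp
  have "(fact (2*n+1) :: real) = fact n * pochhammer (real (n+1)) (Suc n)"
    using h unfolding e1 e2 pochhammer_fact[symmetric] .
  thus ?thesis by (metis fact_nonzero nonzero_mult_div_cancel_left)
qed

lemma sumT: "(\<Sum>j=0..n. (-1)^j * real (n choose j) / real (2*n+1-j)) = (-1)^n * (fact n * fact n / fact (2*n+1))"
proof -
  have "(\<Sum>j=0..n. (-1)^j * real (n choose j) / real (2*n+1-j))
      = (\<Sum>i=0..n. (-1)^(n-i) * real (n choose (n-i)) / real (2*n+1-(n-i)))"
    by (subst sum.atLeastAtMost_rev) simp
  also have "\<dots> = (\<Sum>i=0..n. (-1)^n * ((-1)^i * real (n choose i) / real (n+1+i)))"
  proof (intro sum.cong refl)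
    fix i assume i: "i \<in> {0..n}"
    have a: "(-1::real)^n = (-1)^(n-i) * (-1)^i" using i by (simp add: power_add[symmetric])
    have sq: "(-1::real)^i * (-1)^i = 1" by (simp flip: power_mult_distrib)
    have "(-1::real)^(n-i) = (-1)^(n-i) * ((-1)^i * (-1)^i)" using sq by simp
    also have "\<dots> = (-1)^n * (-1)^i" unfolding a by (simp only: mult.assoc)
    finally have "(-1::real)^(n-i) = (-1)^n * (-1)^i" .
    moreover have "2*n+1-(n-i) = n+1+i" using i by auto
    moreover have "n choose (n-i) = n choose i" using i by (metis atLeastAtMost_iff binomial_symmetric)
    ultimately show "(-1)^(n-i) * real (n choose (n-i)) / real (2*n+1-(n-i)) = (-1)^n * ((-1)^i * real (n choose i) / real (n+1+i))"
      by simp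
  qed
  also have "\<dots> = (-1)^n * pfs n (n+1)" by (simp add: pfs_def sum_distrib_left)
  also have "pfs n (n+1) = fact n * fact n / fact (2*n+1)"
  proof -
    have "pfs n (n+1) = fact n / pochhammer (real (n+1)) (Suc n)" by (rule pf) simp
    thus ?thesis unfolding poch_n1 by simp
  qed
  finally show ?thesis .
qed



lemma term_eq:
  assumes "j \<le> n"
  shows "fps_exp 2 $ (2*n+1-j) * Bf n $ j
     = of_real ((-1)^j * 2^(2*n+1) / fact (2*n) * real (n choose j) / real (2*n+1-j))"
proof -
  have "fps_exp 2 $ (2*n+1-j) * Bf n $ j = of_real (2^(2*n+1-j) / fact (2*n+1-j) * (-1)^j * (yr n (n-j) / yr n n))"
    using assms by (simp add: Bf_nth q_def yc_def)
  also have "\<dots> = of_real ((-1)^j * 2^(2*n+1) / fact (2*n) * real (n choose j) / real (2*n+1-j))"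
    using Tj[OF assms] by simp
  finally show ?thesis .
qed

lemma kappa_val: "kappa n = - of_real ((-1)^n * 2^(2*n+1) * fact n * fact n / (fact (2*n) * fact (2*n+1)))"
proof -
  let ?N = "2*n+1"
  have "kappa n = q n ?N - (fps_exp 2 * Bf n) $ ?N" by (simp add: kappa_def phi_def Qf_nth)
  also have "q n ?N = 0" by (simp add: q_def)
  also have "(fps_exp 2 * Bf n) $ ?N = (\<Sum>i=0..?N. fps_exp 2 $ i * Bf n $ (?N - i))"
    by (rule fps_mult_nth)
  also have "\<dots> = (\<Sum>j=0..?N. fps_exp 2 $ (?N - j) * Bf n $ j)"
    by (subst sum.atLeastAtMost_rev) (intro sum.cong refl, simp)
  also have "\<dots> = (\<Sum>j=0..n. fps_exp 2 $ (?N - j) * Bf n $ j)"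
    by (rule sum.mono_neutral_right) (auto simp: Bf_nth q_def)
  also have "\<dots> = (\<Sum>j=0..n. of_real ((-1)^j * 2^(2*n+1) / fact (2*n) * real (n choose j) / real (2*n+1-j)))"
    by (intro sum.cong refl term_eq) simp
  also have "\<dots> = of_real (2^(2*n+1) / fact (2*n) * (\<Sum>j=0..n. (-1)^j * real (n choose j) / real (2*n+1-j)))"
    by (simp add: of_real_sum[symmetric] sum_distrib_left mult_ac)
  also have "\<dots> = of_real ((-1)^n * 2^(2*n+1) * fact n * fact n / (fact (2*n) * fact (2*n+1)))"
    unfolding sumT by (simp add: field_simps)
  finally show ?thesis by simp
qed



lemma real_c:
  "real (2*n+1) * ((-1)^n * 2^(2*n+1) * fact n * fact n / (fact (2*n) * fact (2*n+1))) / 2^(2*n+1)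
   = (-1)^n * (fact n)^2 / (fact (2*n))^2"
proof -
  have f: "(fact (2*n+1) :: real) = real (2*n+1) * fact (2*n)" by simp
  have aux: "\<And>(r::real) s P A B. r > 0 \<Longrightarrow> P > 0 \<Longrightarrow> B > 0 \<Longrightarrow>
     r * (s * P * A * A / (B * (r * B))) / P = s * A^2 / B^2"
    by (simp add: field_simps power2_eq_square)
  show ?thesis unfolding f by (rule aux) auto
qed

lemma top_term:
  assumes "n \<ge> 1"
  shows "(- 2 / 2^(2*n+1)) * psum n (2*n+1) = - ((-1)^n * (fact n)^2 / (fact (2*n))^2 :: complex)"
proof -
  define X :: real where "X = (-1)^n * 2^(2*n+1) * fact n * fact n / (fact (2*n) * fact (2*n+1))"
  have ps: "2 * psum n (2*n+1) = of_nat (2*n+1) * of_real X"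
    using psum_odd(3)[OF assms] unfolding kappa_val X_def by simp
  have "(- 2 / 2^(2*n+1)) * psum n (2*n+1) = - (2 * psum n (2*n+1)) / 2^(2*n+1)"
    by simp
  also have "\<dots> = - of_real (real (2*n+1) * X / 2^(2*n+1))"
    unfolding ps by simp
  also have "real (2*n+1) * X / 2^(2*n+1) = (-1)^n * (fact n)^2 / (fact (2*n))^2"
    unfolding X_def by (rule real_c)
  finally show ?thesis by simp
qed

lemma binom_diff:
  "(1 - z/2)^m - (1 + z/2)^m = (\<Sum>j\<le>m. of_nat (m choose j) * ((-1/2)^j - (1/2)^j) * (z::complex)^j)"
proof -
  have a: "(1 - z/2)^m = (\<Sum>j\<le>m. of_nat (m choose j) * (-z/2)^j * 1^(m-j))"
    using binomial_ring[of "-z/2" 1 m] by simp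
  have b: "(1 + z/2)^m = (\<Sum>j\<le>m. of_nat (m choose j) * (z/2)^j * 1^(m-j))"
    using binomial_ring[of "z/2" 1 m] by (simp add: add.commute)
  show ?thesis unfolding a b sum_subtractf[symmetric]
    by (intro sum.cong refl) (simp add: power_divide power_minus' algebra_simps)
qed


lemma key_sum:
  assumes n1: "n \<ge> 1" and m: "m \<le> 2*n+1"
  shows "(\<Sum>z\<in>bessel_zeros n. (1 - z/2)^m - (1 + z/2)^m)
       = of_nat m - (if m = 2*n+1 then (-1)^n * (fact n)^2 / (fact (2*n))^2 else 0)"
proof -
  define t where "t j = of_nat (m choose j) * ((-1/2)^j - (1/2)^j) * psum n j" for j
  have "(\<Sum>z\<in>bessel_zeros n. (1 - z/2)^m - (1 + z/2)^m)
      = (\<Sum>z\<in>bessel_zeros n. \<Sum>j\<le>m. of_nat (m choose j) * ((-1/2)^j - (1/2)^j) * z^j)"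
    unfolding binom_diff ..
  also have "\<dots> = (\<Sum>j\<le>m. t j)"
    unfolding t_def psum_def by (subst sum.swap) (simp add: sum_distrib_left)
  also have "\<dots> = (\<Sum>j\<le>2*n+1. t j)"
    by (rule sum.mono_neutral_left) (use m in \<open>auto simp: t_def\<close>)
  also have "\<dots> = (\<Sum>j\<in>{1, 2*n+1}. t j)"
  proof (rule sum.mono_neutral_right)
    show "finite {..2*n+1}" by simp
    show "{1, 2*n+1} \<subseteq> {..2*n+1}" by auto
    show "\<forall>j\<in>{..2*n+1} - {1, 2*n+1}. t j = 0"
    proof
      fix j assume j: "j \<in> {..2*n+1} - {1, 2*n+1}"
      show "t j = 0"
      proof (cases "even j")
        case True
        hence "(-1/2 :: complex)^j = (1/2)^j" by (simp add: power_divide)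
        thus ?thesis by (simp add: t_def)
      next
        case False
        then obtain k where k: "j = 2*k+1" by (metis oddE)
        have "0 < k" "k < n" using j k by auto
        hence "psum n j = 0" using psum_odd(2)[OF n1] k by simp
        thus ?thesis by (simp add: t_def)
      qed
    qed
  qed
  also have "\<dots> = t 1 + t (2*n+1)" using n1 by simp
  also have "t 1 = of_nat m" using psum_odd(1)[OF n1] by (simp add: t_def)
  also have "t (2*n+1) = (if m = 2*n+1 then - ((-1)^n * (fact n)^2 / (fact (2*n))^2) else 0)"
  proof (cases "m = 2*n+1")
    case True
    have "t (2*n+1) = (- 2 / 2^(2*n+1)) * psum n (2*n+1)"
      using True by (simp add: t_def power_divide field_simps)
    thus ?thesis using top_term[OF n1] True by simp
  next
    case False
    hence "m < 2*n+1" using m by simp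
    thus ?thesis by (simp add: t_def)
  qed
  finally show ?thesis by simp
qed



lemma scaled_exp:
  assumes R: "R > 0" and f: "f holomorphic_on ball 0 R"
  shows "(\<lambda>z. f (u*z)) has_fps_expansion Abs_fps (\<lambda>m. u^m * taylor_coeff f m)"
proof -
  define r where "r = R / (norm u + 1)"
  have r: "r > 0" unfolding r_def using R by (intro divide_pos_pos) (auto intro: add_nonneg_pos)
  have nz: "norm u + 1 \<noteq> 0" using norm_ge_zero[of u] by linarith
  have sub: "u * w \<in> ball 0 R" if "w \<in> ball 0 r" for w
  proof -
    have "norm (u * w) = norm u * norm w" by (simp add: norm_mult)
    also have "\<dots> \<le> norm u * r" using that by (intro mult_left_mono) auto
    also have "\<dots> < (norm u + 1) * r" using r by (simp add: algebra_simps)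
    also have "\<dots> = R" using nz by (simp add: r_def)
    finally show ?thesis by simp
  qed
  have hol: "(\<lambda>z. f (u*z)) holomorphic_on ball 0 r"
  proof -
    have img: "(\<lambda>z. u*z) ` ball 0 r \<subseteq> ball 0 R" using sub by auto
    have "(\<lambda>z. u*z) holomorphic_on ball 0 r" by (intro holomorphic_intros)
    from holomorphic_on_compose_gen[OF this f img] show ?thesis by (simp add: o_def)
  qed
  have an: "(\<lambda>z. f (u*z)) analytic_on {0}"
    by (rule holomorphic_on_imp_analytic_at[OF hol]) (use r in auto)
  have e: "fps_expansion (\<lambda>z. f (u*z)) 0 = Abs_fps (\<lambda>m. u^m * taylor_coeff f m)"
  proof (rule fps_ext)
    fix m
    have "(deriv ^^ m) (\<lambda>w. f (u * w)) 0 = u^m * (deriv ^^ m) f (u * 0)"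
      by (rule higher_deriv_compose_linear[OF f open_ball[of 0 r] open_ball[of 0 R] _ sub]) (use r in auto)
    thus "fps_expansion (\<lambda>z. f (u*z)) 0 $ m = Abs_fps (\<lambda>m. u^m * taylor_coeff f m) $ m"
      by (simp add: fps_expansion_def taylor_coeff_def)
  qed
  show ?thesis using analytic_at_imp_has_fps_expansion_0[OF an] unfolding e .
qed

lemma poly_sum_rem:
  assumes n1: "n \<ge> 1" and N: "N \<le> 2*n"
  shows "bessel_remainder n (\<lambda>w. \<Sum>i\<le>N. c i * w^i) z = 0"
proof -
  have d: "((\<lambda>w. \<Sum>i\<le>N. c i * w^i) has_field_derivative (\<Sum>i\<le>N. of_nat i * z^(i-1) * c i)) (at z)"
    by (auto intro!: derivative_eq_intros)
  have "z * deriv (\<lambda>w. \<Sum>i\<le>N. c i * w^i) z = (\<Sum>i\<le>N. c i * z^i * of_nat i)"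
    unfolding DERIV_imp_deriv[OF d] sum_distrib_left
  proof (intro sum.cong refl)
    fix i show "z * (of_nat i * z^(i-1) * c i) = c i * z^i * of_nat i"
      by (cases i) (simp_all add: algebra_simps)
  qed
  moreover have "(\<Sum>\<alpha>\<in>bessel_zeros n. (\<Sum>i\<le>N. c i * ((1 - \<alpha>/2)*z)^i) - (\<Sum>i\<le>N. c i * ((1 + \<alpha>/2)*z)^i))
     = (\<Sum>i\<le>N. c i * z^i * (\<Sum>\<alpha>\<in>bessel_zeros n. (1 - \<alpha>/2)^i - (1 + \<alpha>/2)^i))"
  proof -
    have "(\<Sum>\<alpha>\<in>bessel_zeros n. (\<Sum>i\<le>N. c i * ((1 - \<alpha>/2)*z)^i) - (\<Sum>i\<le>N. c i * ((1 + \<alpha>/2)*z)^i))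
      = (\<Sum>\<alpha>\<in>bessel_zeros n. \<Sum>i\<le>N. c i * z^i * ((1 - \<alpha>/2)^i - (1 + \<alpha>/2)^i))"
      unfolding power_mult_distrib sum_subtractf[symmetric] by (intro sum.cong refl) (simp add: algebra_simps)
    also have "\<dots> = (\<Sum>i\<le>N. \<Sum>\<alpha>\<in>bessel_zeros n. c i * z^i * ((1 - \<alpha>/2)^i - (1 + \<alpha>/2)^i))"
      by (rule sum.swap)
    also have "\<dots> = (\<Sum>i\<le>N. c i * z^i * (\<Sum>\<alpha>\<in>bessel_zeros n. (1 - \<alpha>/2)^i - (1 + \<alpha>/2)^i))"
      by (simp add: sum_distrib_left)
    finally show ?thesis .
  qed
  moreover have "(\<Sum>\<alpha>\<in>bessel_zeros n. (1 - \<alpha>/2)^i - (1 + \<alpha>/2)^i) = of_nat i" if "i \<le> N" for i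
    using key_sum[OF n1, of i] that N by simp
  ultimately show ?thesis unfolding bessel_remainder_def by simp
qed



theorem mainTheorem2:
  fixes n :: nat and f :: "complex \<Rightarrow> complex" and R :: real
  assumes "n \<ge> 1" and "R > 0" and "f holomorphic_on ball 0 R"
  shows "(\<lambda>z. bessel_remainder n f z
            - (-1)^n * (fact n)^2 / (fact (2*n))^2 * taylor_coeff f (2*n+1) * z^(2*n+1))
           \<in> O[at 0](\<lambda>z. z^(2*n+2))
         \<and> (\<forall>p :: complex poly. degree p \<le> 2*n \<longrightarrow> (\<forall>z. bessel_remainder n (poly p) z = 0))"
proof
  note n1 = assms(1)
  show "\<forall>p :: complex poly. degree p \<le> 2*n \<longrightarrow> (\<forall>z. bessel_remainder n (poly p) z = 0)"
  proof (intro allI impI)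
    fix p :: "complex poly" and z assume dp: "degree p \<le> 2*n"
    have "poly p = (\<lambda>w. \<Sum>i\<le>2*n. coeff p i * w^i)"
    proof
      fix w
      show "poly p w = (\<Sum>i\<le>2*n. coeff p i * w^i)"
        unfolding poly_altdef
        by (rule sum.mono_neutral_left) (use dp in \<open>auto simp: coeff_eq_0\<close>)
    qed
    thus "bessel_remainder n (poly p) z = 0" using poly_sum_rem[OF n1 order.refl] by simp
  qed
next
  note n1 = assms(1)
  define tc where "tc = taylor_coeff f"
  define K where "K = (-1)^n * (fact n)^2 / (fact (2*n))^2 * taylor_coeff f (2*n+1)"
  define Sc where "Sc u = Abs_fps (\<lambda>m. u^m * tc m)" for u :: complex
  define Z where "Z = bessel_zeros n"
  have an: "f analytic_on {0}"
    by (rule holomorphic_on_imp_analytic_at[OF assms(3) open_ball]) (use assms(2) in simp)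
  have F: "f has_fps_expansion Abs_fps tc"
  proof -
    have "fps_expansion f 0 = Abs_fps tc"
      unfolding fps_expansion_def tc_def taylor_coeff_def[abs_def] ..
    thus ?thesis using analytic_at_imp_has_fps_expansion_0[OF an] by simp
  qed
  have sc: "(\<lambda>z. f (u*z)) has_fps_expansion Sc u" for u
    unfolding Sc_def tc_def by (rule scaled_exp[OF assms(2,3)])
  have rem: "bessel_remainder n f = (\<lambda>z. z * deriv f z - (\<Sum>\<alpha>\<in>Z. f ((1 - \<alpha>/2) * z) - f ((1 + \<alpha>/2) * z)))"
    by (rule ext) (simp add: bessel_remainder_def Z_def)
  define Gf where "Gf = fps_X * fps_deriv (Abs_fps tc) - (\<Sum>\<alpha>\<in>Z. Sc (1 - \<alpha>/2) - Sc (1 + \<alpha>/2))"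
  have G: "bessel_remainder n f has_fps_expansion Gf"
    unfolding rem Gf_def
    by (intro has_fps_expansion_diff has_fps_expansion_mult has_fps_expansion_fps_X
              has_fps_expansion_deriv F has_fps_expansion_sum sc)
  define hfun where "hfun z = bessel_remainder n f z - K * z^(2*n+1)" for z
  define Hf where "Hf = Gf - fps_const K * fps_X^(2*n+1)"
  have H: "hfun has_fps_expansion Hf"
    unfolding hfun_def Hf_def
    by (intro has_fps_expansion_diff G has_fps_expansion_cmult_left has_fps_expansion_fps_X_power)
  have Hc: "Hf $ m = 0" if "m < 2*n+2" for m
  proof -
    have ks: "(\<Sum>\<alpha>\<in>Z. (1 - \<alpha>/2)^m - (1 + \<alpha>/2)^m) = of_nat m - (if m = 2*n+1 then (-1)^n * (fact n)^2 / (fact (2*n))^2 else 0)"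
      unfolding Z_def by (rule key_sum[OF n1]) (use that in simp)
    have "Gf $ m = of_nat m * tc m - (\<Sum>\<alpha>\<in>Z. (1 - \<alpha>/2)^m - (1 + \<alpha>/2)^m) * tc m"
    proof -
      have a: "(fps_X * fps_deriv (Abs_fps tc)) $ m = of_nat m * tc m"
        by (cases m) (simp_all add: algebra_simps)
      have b: "(\<Sum>\<alpha>\<in>Z. Sc (1 - \<alpha>/2) - Sc (1 + \<alpha>/2)) $ m = (\<Sum>\<alpha>\<in>Z. (1 - \<alpha>/2)^m - (1 + \<alpha>/2)^m) * tc m"
        by (simp add: fps_sum_nth Sc_def sum_distrib_right left_diff_distrib)
      show ?thesis unfolding Gf_def fps_sub_nth a b ..
    qed
    also have "\<dots> = (if m = 2*n+1 then (-1)^n * (fact n)^2 / (fact (2*n))^2 else 0) * tc m"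
      unfolding ks by (simp add: algebra_simps)
    finally have "Gf $ m = (if m = 2*n+1 then (-1)^n * (fact n)^2 / (fact (2*n))^2 else 0) * tc m" .
    thus ?thesis by (auto simp: Hf_def K_def tc_def)
  qed
  have "hfun \<in> O[at 0](\<lambda>z. z^(2*n+2))"
  proof (cases "Hf = 0")
    case True
    have "eventually (\<lambda>z. eval_fps Hf z = hfun z) (nhds 0)" using H by (simp add: has_fps_expansion_def)
    hence "eventually (\<lambda>z. hfun z = 0) (nhds 0)" using True by (auto elim: eventually_mono)
    hence "eventually (\<lambda>z. hfun z = 0) (at 0)" by (rule filter_leD[OF at_within_le_nhds])
    hence "eventually (\<lambda>z. norm (hfun z) \<le> 0 * norm (z^(2*n+2))) (at 0)" by (auto elim: eventually_mono)
    thus ?thesis by (rule bigoI)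
  next
    case False
    have sd: "2*n+2 \<le> subdegree Hf" by (rule subdegree_geI[OF False Hc])
    define g where "g x = (if x = 0 then Hf $ (2*n+2) else hfun x / x^(2*n+2))" for x
    have gH: "g has_fps_expansion fps_shift (2*n+2) Hf"
      unfolding g_def by (rule has_fps_expansion_shift[OF H sd refl])
    have "continuous (at 0) g" using has_fps_expansion_imp_continuous[OF gH] by simp
    hence "(g \<longlongrightarrow> g 0) (at 0)" by (simp add: continuous_at)
    hence ev1: "eventually (\<lambda>x. dist (g x) (g 0) < 1) (at 0)" by (rule tendstoD) simp
    have ev2: "eventually (\<lambda>x. x \<noteq> 0) (at (0::complex))" by (simp add: eventually_at_filter)
    have "eventually (\<lambda>x. norm (hfun x) \<le> (norm (g 0) + 1) * norm (x^(2*n+2))) (at 0)"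
      using ev1 ev2
    proof eventually_elim
      case (elim x)
      have "hfun x = g x * x^(2*n+2)" using elim(2) by (simp add: g_def)
      hence "norm (hfun x) = norm (g x) * norm (x^(2*n+2))" by (simp add: norm_mult)
      moreover have "norm (g x) \<le> norm (g 0) + 1"
        using elim(1) norm_triangle_ineq2[of "g x" "g 0"] by (simp add: dist_norm)
      ultimately show ?case by (simp add: mult_right_mono)
    qed
    thus ?thesis by (rule bigoI)
  qed
  thus "(\<lambda>z. bessel_remainder n f z
            - (-1)^n * (fact n)^2 / (fact (2*n))^2 * taylor_coeff f (2*n+1) * z^(2*n+1))
           \<in> O[at 0](\<lambda>z. z^(2*n+2))"
    unfolding hfun_def K_def .
qed


end
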